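(* Let $\mathcal{A}$ be a complex Banach algebra with identity, let $\lambda$ be a nonzero complex number, and let $a \in \mathcal{A}^{qnil}$ and $b \in \mathcal{A}^d$. If $$ab = \lambda\, b a b^\pi,$$ then $a + b \in \mathcal{A}^d$ and $$(a + b)^d = b^d + \sum_{n=0}^{\infty} (b^d)^{n+2} a (a + b)^n,$$ where the series converges.
   Context: For $x\in\mathcal{A}$, $\mathrm{comm}(x)=\{y\in\mathcal{A}: xy=yx\}$. $\mathcal{A}^{qnil}$ is the set of quasinilpotent elements of $\mathcal{A}$, i.e. those $x$ with $\lim_{n\to\infty}\|x^n\|^{1/n}=0$. An element $x\in\mathcal{A}$ has a generalized Drazin (g-Drazin) inverse if there is $y \in \mathrm{comm}(x)$ with $y = yxy$ and $x - x^2y \in \mathcal{A}^{qnil}$; such $y$ is unique and denoted $x^d$. $\mathcal{A}^d$ denotes the set of g-Drazin invertible elements. The spectral idempotent of $x\in\mathcal{A}^d$ is $x^\pi = 1 - xx^d$. *)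

theory Defs
  imports Complex_Main
begin

class complex_banach_algebra_1 = real_normed_algebra_1 + banach +
  fixes scaleC :: "complex \<Rightarrow> 'a \<Rightarrow> 'a"
  assumes scaleC_add_right: "scaleC c (x + y) = scaleC c x + scaleC c y"
    and scaleC_add_left: "scaleC (c + d) x = scaleC c x + scaleC d x"
    and scaleC_scaleC: "scaleC c (scaleC d x) = scaleC (c * d) x"
    and scaleC_one: "scaleC 1 x = x"
    and scaleC_of_real: "scaleC (complex_of_real r) x = scaleR r x"
    and norm_scaleC: "norm (scaleC c x) = cmod c * norm x"
    and mult_scaleC_left: "scaleC c x * y = scaleC c (x * y)"
    and mult_scaleC_right: "x * scaleC c y = scaleC c (x * y)"

definition qnil :: "'a::real_normed_algebra_1 \<Rightarrow> bool" where
  "qnil x \<longleftrightarrow> (\<lambda>n. root n (norm (x ^ n))) \<longlonglongrightarrow> 0"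

definition is_gdrazin_inv :: "'a::real_normed_algebra_1 \<Rightarrow> 'a \<Rightarrow> bool" where
  "is_gdrazin_inv x y \<longleftrightarrow> x * y = y * x \<and> y = y * x * y \<and> qnil (x - x^2 * y)"

definition gdrazin :: "'a::real_normed_algebra_1 \<Rightarrow> bool" where
  "gdrazin x \<longleftrightarrow> (\<exists>y. is_gdrazin_inv x y)"

definition gdrazin_inv :: "'a::real_normed_algebra_1 \<Rightarrow> 'a" where
  "gdrazin_inv x = (THE y. is_gdrazin_inv x y)"

definition spec_idem :: "'a::real_normed_algebra_1 \<Rightarrow> 'a" where
  "spec_idem x = 1 - x * gdrazin_inv x"

end

theory Submission
  imports Defs
begin


lemma qnil_bound:
  fixes x :: "'a::real_normed_algebra_1"
  assumes "qnil x" "e > 0"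
  obtains K where "K \<ge> 1" "\<And>n. norm (x^n) \<le> K * e^n"
proof -
  have "eventually (\<lambda>n. root n (norm (x^n)) < e) sequentially"
    using assms unfolding qnil_def by (auto intro: order_tendstoD(2))
  then obtain M where M: "\<And>n. n \<ge> M \<Longrightarrow> root n (norm (x^n)) < e"
    by (auto simp: eventually_sequentially)
  define N where "N = max M 1"
  define K where "K = 1 + (\<Sum>j<N. norm (x^j) / e^j)"
  have K1: "K \<ge> 1" unfolding K_def using assms(2) by (auto intro!: sum_nonneg)
  have "norm (x^n) \<le> K * e^n" for n
  proof (cases "n < N")
    case True
    have "norm (x^n) / e^n \<le> (\<Sum>j<N. norm (x^j) / e^j)"
      using True assms(2) by (intro member_le_sum) auto
    also have "\<dots> \<le> K" unfolding K_def by simp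
    finally show ?thesis using assms(2) by (simp add: field_simps)
  next
    case False
    hence n: "n \<ge> M" "n > 0" unfolding N_def by auto
    have "norm (x^n) = root n (norm (x^n)) ^ n" using n by (simp add: real_root_pow_pos2)
    also have "\<dots> \<le> e ^ n" using M[OF n(1)] by (intro power_mono) (auto simp: real_root_ge_zero)
    also have "\<dots> \<le> K * e^n" using K1 assms(2) by simp
    finally show ?thesis .
  qed
  thus ?thesis using that K1 by blast
qed

lemma qnil_intro:
  fixes x :: "'a::real_normed_algebra_1"
  assumes "\<And>e. e > 0 \<Longrightarrow> \<exists>K. \<forall>n. norm (x^n) \<le> K * e^n"
  shows "qnil x"
  unfolding qnil_def
proof (rule LIMSEQ_I)
  fix r :: real assume r: "r > 0"
  obtain K0 where K0: "\<forall>n. norm (x^n) \<le> K0 * (r/2)^n" using assms[of "r/2"] r by auto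
  define K where "K = max K0 1"
  have K: "\<forall>n. norm (x^n) \<le> K * (r/2)^n" "K > 0"
    using K0 r unfolding K_def by (auto intro: order_trans mult_right_mono)
  have "(\<lambda>n. root n K) \<longlonglongrightarrow> 1" using K(2) by (rule LIMSEQ_root_const)
  then have "eventually (\<lambda>n. root n K < 3/2) sequentially" by (rule order_tendstoD(2)) simp
  then obtain M where M: "\<And>n. n \<ge> M \<Longrightarrow> root n K < 3/2" by (auto simp: eventually_sequentially)
  show "\<exists>no. \<forall>n\<ge>no. norm (root n (norm (x ^ n)) - 0) < r"
  proof (intro exI allI impI)
    fix n assume n: "n \<ge> max M 1"
    hence n0: "n > 0" by auto
    have "root n (norm (x^n)) \<le> root n (K * (r/2)^n)"
      using K n0 by auto
    also have "\<dots> = root n K * (r/2)"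
      using n0 r by (simp add: real_root_mult real_root_pos2)
    also have "\<dots> < r"
    proof -
      have "root n K < 3/2" using M n by auto
      hence "root n K * (r/2) \<le> 3/2 * (r/2)" using r by (intro mult_right_mono) auto
      thus ?thesis using r by linarith
    qed
    finally show "norm (root n (norm (x ^ n)) - 0) < r"
      using n0 by (simp add: real_root_ge_zero)
  qed
qed



lemma comm_pow_mult:
  fixes x y :: "'a::ring_1"
  assumes "x * y = y * x"
  shows "(x * y)^n = x^n * y^n"
proof (induction n)
  case (Suc n)
  have c: "y * x^n = x^n * y" using assms by (metis power_commutes power_commuting_commutes)
  have "(x*y)^Suc n = x * y * (x^n * y^n)" using Suc by simp
  also have "\<dots> = x * (y * x^n) * y^n" by (simp add: mult.assoc)
  also have "\<dots> = x^Suc n * y^Suc n" using c by (simp add: mult.assoc power_commutes)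
  finally show ?case .
qed simp

lemma norm_zero_from_geom:
  fixes r K :: real
  assumes "\<And>n. n \<ge> 1 \<Longrightarrow> r \<le> K * (1/2)^n" "r \<ge> 0"
  shows "r = 0"
proof -
  have "(\<lambda>n. K * (1/2::real)^n) \<longlonglongrightarrow> 0"
    by (intro tendsto_mult_right_zero LIMSEQ_power_zero) auto
  hence "r \<le> 0" by (rule LIMSEQ_le_const) (use assms(1) in auto)
  thus ?thesis using assms(2) by simp
qed

lemma gd_half:
  fixes x y z :: "'a::real_normed_algebra_1"
  assumes y: "is_gdrazin_inv x y" and z: "is_gdrazin_inv x z"
  shows "x*y = x*y*(x*z) \<and> x*y = x*z*(x*y)"
proof -
  have xy: "x*y = y*x" "y = y*x*y" "qnil (x - x^2*z)" and xz: "x*z = z*x" "z = z*x*z"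
    using y z unfolding is_gdrazin_inv_def by auto
  define e where "e = x*y"
  define f where "f = x*z"
  have ee: "e*e = e" unfolding e_def by (metis xy(2) mult.assoc)
  have ff: "f*f = f" unfolding f_def by (metis xz(2) mult.assoc)
  have epow: "e^n = e" if "n \<ge> 1" for n using that
  proof (induction n rule: dec_induct)
    case (step n) thus ?case using ee by (metis power_Suc2)
  qed simp
  have fx: "f*x = x*f" unfolding f_def using xz(1) by (metis mult.assoc)
  define g where "g = 1 - f"
  have gx: "g*x = x*g" unfolding g_def using fx by (simp add: algebra_simps)
  have gg: "g*g = g" unfolding g_def using ff by (simp add: algebra_simps)
  have xg: "x*g = x - x^2*z" unfolding g_def f_def by (simp add: algebra_simps power2_eq_square)
  have xgpow: "x^n * g = (x*g)^n" "g * x^n = (x*g)^n" if "n \<ge> 1" for n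
  proof -
    have "(x*g)^n = x^n * g^n" by (rule comm_pow_mult) (use gx in simp)
    moreover have "g^n = g" using that
    proof (induction n rule: dec_induct)
      case (step n) thus ?case using gg by (metis power_Suc2)
    qed simp
    ultimately show "x^n * g = (x*g)^n" by simp
    moreover have "g * x^n = x^n * g" using gx by (metis power_commuting_commutes)
    ultimately show "g * x^n = (x*g)^n" by simp
  qed
  have ey: "e^n = y^n * x^n" "e^n = x^n * y^n" for n
  proof -
    have "e^n = (y*x)^n" unfolding e_def using xy(1) by simp
    also have "\<dots> = y^n * x^n" by (rule comm_pow_mult) (use xy(1) in simp)
    finally show "e^n = y^n * x^n" .
    have "e^n = x^n * y^n" unfolding e_def by (rule comm_pow_mult) (use xy(1) in simp)
    thus "e^n = x^n * y^n" .
  qed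
  obtain K where K: "K \<ge> 1" "\<And>n. norm ((x*g)^n) \<le> K * (1/(2*(norm y + 1)))^n"
  proof (rule qnil_bound[OF xy(3)[folded xg], of "1/(2*(norm y + 1))"])
    have "0 < norm y + 1" by (simp add: add_nonneg_pos)
    thus "0 < 1 / (2 * (norm y + 1))" by simp
  qed blast
  have key: "norm (y^n) * norm ((x*g)^n) \<le> K * (1/2)^n" for n
  proof -
    have "norm (y^n) * norm ((x*g)^n) \<le> (norm y + 1)^n * (K * (1/(2*(norm y + 1)))^n)"
      by (intro mult_mono K(2) order_trans[OF norm_power_ineq] power_mono) auto
    also have "\<dots> = K * ((norm y + 1) * (1/(2*(norm y + 1))))^n" by (metis power_mult_distrib mult.left_commute)
    also have "\<dots> = K * (1/2)^n"
    proof -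
      have "0 < norm y + 1" by (simp add: add_nonneg_pos)
      hence "(norm y + 1) * (1/(2*(norm y + 1))) = 1/2" by (simp add: field_simps)
      thus ?thesis by (simp only:)
    qed
    finally show ?thesis .
  qed
  have "norm (e*g) = 0"
  proof (rule norm_zero_from_geom)
    fix n :: nat assume n: "n \<ge> 1"
    have "e*g = y^n * (x*g)^n" using epow[OF n] ey(1)[of n] xgpow(1)[OF n]
      by (metis mult.assoc)
    hence "norm (e*g) \<le> norm (y^n) * norm ((x*g)^n)" by (simp add: norm_mult_ineq)
    thus "norm (e*g) \<le> K * (1/2)^n" using key order_trans by blast
  qed simp
  hence 1: "e = e*f" unfolding g_def by (simp add: algebra_simps)
  have "norm (g*e) = 0"
  proof (rule norm_zero_from_geom)
    fix n :: nat assume n: "n \<ge> 1"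
    have "g*e = (x*g)^n * y^n" using epow[OF n] ey(2)[of n] xgpow(2)[OF n]
      by (metis mult.assoc)
    hence "norm (g*e) \<le> norm ((x*g)^n) * norm (y^n)" by (simp add: norm_mult_ineq)
    thus "norm (g*e) \<le> K * (1/2)^n" using key[of n] by (simp add: mult.commute)
  qed simp
  hence 2: "e = f*e" unfolding g_def by (simp add: algebra_simps)
  show ?thesis using 1 2 unfolding e_def f_def by simp
qed

lemma gd_unique:
  fixes x y z :: "'a::real_normed_algebra_1"
  assumes y: "is_gdrazin_inv x y" and z: "is_gdrazin_inv x z"
  shows "y = z"
proof -
  have a: "x*y = x*y*(x*z)" "x*y = x*z*(x*y)" using gd_half[OF y z] by auto
  have b: "x*z = x*z*(x*y)" "x*z = x*y*(x*z)" using gd_half[OF z y] by auto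
  have exy: "x*y = x*z" using a b by simp
  have xy: "x*y = y*x" "y = y*x*y" and xz: "x*z = z*x" "z = z*x*z"
    using y z unfolding is_gdrazin_inv_def by auto
  have "y = (x*y)*y" using xy by (metis mult.assoc)
  also have "\<dots> = (z*x)*y" using exy xz by simp
  also have "\<dots> = z*(x*y)" by (simp add: mult.assoc)
  also have "\<dots> = z*(x*z)" using exy by simp
  also have "\<dots> = z" using xz by (simp add: mult.assoc)
  finally show ?thesis .
qed

lemma gd_inv_eq:
  fixes x y :: "'a::real_normed_algebra_1"
  assumes "is_gdrazin_inv x y" shows "gdrazin_inv x = y"
  unfolding gdrazin_inv_def using assms gd_unique by blast



lemma scaleC_zero_left [simp]: "scaleC 0 (x::'a::complex_banach_algebra_1) = 0"
  using scaleC_of_real[of 0 x] by simp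

lemma scaleC_zero_right [simp]: "scaleC c (0::'a::complex_banach_algebra_1) = 0"
  using scaleC_add_right[of c "0::'a" 0] by simp


fun qb :: "complex \<Rightarrow> nat \<Rightarrow> nat \<Rightarrow> complex" where
  "qb m 0 k = (if k = 0 then 1 else 0)"
| "qb m (Suc n) k = m^k * qb m n k + (if k = 0 then 0 else qb m n (k - 1))"

lemma qb_zero: "k > n \<Longrightarrow> qb m n k = 0"
  by (induction n arbitrary: k) auto

lemma qb_bound: "cmod m \<le> 1 \<Longrightarrow> cmod (qb m n k) \<le> real (n choose k)"
proof (induction n arbitrary: k)
  case 0 thus ?case by auto
next
  case (Suc n)
  have a: "cmod (m^k * qb m n k) \<le> real (n choose k)"
  proof -
    have "cmod (m^k * qb m n k) = cmod m ^ k * cmod (qb m n k)" by (simp add: norm_mult norm_power)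
    also have "\<dots> \<le> 1 * real (n choose k)"
      using Suc by (intro mult_mono power_le_one) auto
    finally show ?thesis by simp
  qed
  show ?case
  proof (cases k)
    case 0 thus ?thesis using a by simp
  next
    case (Suc j)
    have "cmod (qb m (Suc n) k) \<le> cmod (m^k * qb m n k) + cmod (qb m n j)"
      using Suc by (simp add: norm_triangle_ineq)
    also have "\<dots> \<le> real (n choose k) + real (n choose j)" using a Suc.IH[of j] \<open>cmod m \<le> 1\<close> by simp
    also have "\<dots> = real (Suc n choose k)" using Suc by simp
    finally show ?thesis .
  qed
qed

lemma comm_pow_scale:
  fixes a b :: "'a::complex_banach_algebra_1"
  assumes "a * b = scaleC m (b * a)"
  shows "a * b^k = scaleC (m^k) (b^k * a)"
proof (induction k)
  case 0 thus ?case by (simp add: scaleC_one)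
next
  case (Suc k)
  have "a * b^Suc k = (a*b) * b^k" by (simp add: mult.assoc)
  also have "\<dots> = scaleC m (b * (a * b^k))" using assms by (simp add: mult_scaleC_left mult.assoc)
  also have "\<dots> = scaleC (m^Suc k) (b^Suc k * a)" using Suc
    by (simp add: mult_scaleC_right scaleC_scaleC mult.assoc mult.commute)
  finally show ?case .
qed

lemma expand:
  fixes a b :: "'a::complex_banach_algebra_1"
  assumes "a * b = scaleC m (b * a)"
  shows "(a + b)^n = (\<Sum>k\<le>n. scaleC (qb m n k) (b^k * a^(n-k)))"
proof (induction n)
  case 0 thus ?case by (simp add: scaleC_one)
next
  case (Suc n)
  have A: "a * (\<Sum>k\<le>n. scaleC (qb m n k) (b^k * a^(n-k)))
      = (\<Sum>k\<le>n. scaleC (m^k * qb m n k) (b^k * a^(Suc n-k)))"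
  proof -
    have "a * (\<Sum>k\<le>n. scaleC (qb m n k) (b^k * a^(n-k)))
        = (\<Sum>k\<le>n. scaleC (qb m n k) ((a * b^k) * a^(n-k)))"
      by (simp add: sum_distrib_left mult_scaleC_right mult.assoc)
    also have "\<dots> = (\<Sum>k\<le>n. scaleC (m^k * qb m n k) (b^k * a^(Suc n-k)))"
    proof (intro sum.cong refl)
      fix k assume "k \<in> {..n}"
      hence "Suc n - k = Suc (n - k)" by auto
      thus "scaleC (qb m n k) ((a * b^k) * a^(n-k)) = scaleC (m^k * qb m n k) (b^k * a^(Suc n-k))"
        by (simp add: comm_pow_scale[OF assms] mult_scaleC_left scaleC_scaleC mult.assoc mult.commute)
    qed
    finally show ?thesis .
  qed
  have B: "b * (\<Sum>k\<le>n. scaleC (qb m n k) (b^k * a^(n-k)))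
      = (\<Sum>k\<le>n. scaleC (qb m n k) (b^Suc k * a^(Suc n - Suc k)))"
    by (simp add: sum_distrib_left mult_scaleC_right mult.assoc)
  have C: "(\<Sum>k\<le>Suc n. scaleC (qb m (Suc n) k) (b^k * a^(Suc n-k)))
     = (\<Sum>k\<le>Suc n. scaleC (m^k * qb m n k) (b^k * a^(Suc n-k)))
       + (\<Sum>k\<le>Suc n. scaleC (if k = 0 then 0 else qb m n (k - 1)) (b^k * a^(Suc n-k)))"
    by (simp add: scaleC_add_left sum.distrib del: sum.atMost_Suc)
  have D: "(\<Sum>k\<le>Suc n. scaleC (m^k * qb m n k) (b^k * a^(Suc n-k)))
     = (\<Sum>k\<le>n. scaleC (m^k * qb m n k) (b^k * a^(Suc n-k)))"
    by (simp add: qb_zero)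
  have E: "(\<Sum>k\<le>Suc n. scaleC (if k = 0 then 0 else qb m n (k - 1)) (b^k * a^(Suc n-k)))
     = (\<Sum>k\<le>n. scaleC (qb m n k) (b^Suc k * a^(Suc n - Suc k)))"
    by (subst sum.atMost_Suc_shift) simp
  have "(a+b)^Suc n = a * (a+b)^n + b * (a+b)^n" by (simp add: distrib_right)
  also have "\<dots> = (\<Sum>k\<le>Suc n. scaleC (qb m (Suc n) k) (b^k * a^(Suc n-k)))"
    using A B C D E Suc by simp
  finally show ?case .
qed

lemma expand_norm:
  fixes a b :: "'a::complex_banach_algebra_1"
  assumes "a * b = scaleC m (b * a)" "cmod m \<le> 1"
  shows "norm ((a + b)^n) \<le> (\<Sum>k\<le>n. real (n choose k) * (norm (b^k) * norm (a^(n-k))))"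
proof -
  have "norm ((a + b)^n) \<le> (\<Sum>k\<le>n. norm (scaleC (qb m n k) (b^k * a^(n-k))))"
    unfolding expand[OF assms(1)] by (rule norm_sum)
  also have "\<dots> \<le> (\<Sum>k\<le>n. real (n choose k) * (norm (b^k) * norm (a^(n-k))))"
  proof (intro sum_mono)
    fix k
    show "norm (scaleC (qb m n k) (b^k * a^(n-k))) \<le> real (n choose k) * (norm (b^k) * norm (a^(n-k)))"
      unfolding norm_scaleC
      by (intro mult_mono qb_bound assms(2) norm_mult_ineq) auto
  qed
  finally show ?thesis .
qed

lemma qnil_from_binom:
  fixes a b z :: "'a::real_normed_algebra_1"
  assumes "qnil a" "qnil b"
    and bnd: "\<And>n. norm (z^n) \<le> (\<Sum>k\<le>n. real (n choose k) * (norm (b^k) * norm (a^(n-k))))"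
  shows "qnil z"
proof (rule qnil_intro)
  fix e :: real assume e: "e > 0"
  obtain K1 where K1: "K1 \<ge> 1" "\<And>n. norm (a^n) \<le> K1 * (e/2)^n" using qnil_bound[OF assms(1), of "e/2"] e by auto
  obtain K2 where K2: "K2 \<ge> 1" "\<And>n. norm (b^n) \<le> K2 * (e/2)^n" using qnil_bound[OF assms(2), of "e/2"] e by auto
  show "\<exists>K. \<forall>n. norm (z^n) \<le> K * e^n"
  proof (intro exI allI)
    fix n
    have "norm (z^n) \<le> (\<Sum>k\<le>n. real (n choose k) * (norm (b^k) * norm (a^(n-k))))" by (rule bnd)
    also have "\<dots> \<le> (\<Sum>k\<le>n. real (n choose k) * (K2 * K1 * (e/2)^n))"
    proof (intro sum_mono mult_left_mono)
      fix k assume k: "k \<in> {..n}"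
      have "norm (b^k) * norm (a^(n-k)) \<le> (K2 * (e/2)^k) * (K1 * (e/2)^(n-k))"
        using e K1(1) K2(1) by (intro mult_mono K1 K2) auto
      also have "\<dots> = K2 * K1 * ((e/2)^k * (e/2)^(n-k))" by (simp add: mult_ac)
      also have "\<dots> = K2 * K1 * (e/2)^n" using k by (simp add: power_add[symmetric])
      finally show "norm (b^k) * norm (a^(n-k)) \<le> K2 * K1 * (e/2)^n" .
    qed auto
    also have "\<dots> = real (\<Sum>k\<le>n. n choose k) * (K2 * K1 * (e/2)^n)"
      by (simp add: sum_distrib_right)
    also have "\<dots> = (K2 * K1) * e^n" by (simp add: choose_row_sum power_divide)
    finally show "norm (z^n) \<le> (K2 * K1) * e^n" .
  qed
qed

lemma qnil_lambda_sum:
  fixes a b :: "'a::complex_banach_algebra_1"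
  assumes "a * b = scaleC m (b * a)" "m \<noteq> 0" "qnil a" "qnil b"
  shows "qnil (a + b)"
proof (cases "cmod m \<le> 1")
  case True
  show ?thesis by (rule qnil_from_binom[OF assms(3,4) expand_norm[OF assms(1) True]])
next
  case False
  have ba: "b * a = scaleC (1/m) (a * b)" using assms(1,2) by (simp add: scaleC_scaleC scaleC_one)
  have m1: "cmod m > 1" using False by simp
  have "cmod (1/m) = 1 / cmod m" by (simp add: norm_divide)
  also have "\<dots> \<le> 1" using m1 by (simp add: divide_le_eq)
  finally have "cmod (1/m) \<le> 1" .
  from qnil_from_binom[OF assms(4,3) expand_norm[OF ba this]]
  show ?thesis by (simp add: add.commute)
qed



lemma qnil_shift:
  fixes z w :: "'a::real_normed_algebra_1"
  assumes "qnil w" "\<And>n. norm (z^(Suc n)) \<le> C * norm (w^n)"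
  shows "qnil z"
proof (rule qnil_intro)
  fix e :: real assume e: "e > 0"
  obtain K where K: "K \<ge> 1" "\<And>n. norm (w^n) \<le> K * e^n" using qnil_bound[OF assms(1) e] by auto
  define K' where "K' = 1 + \<bar>C\<bar> * K / e"
  have K'1: "K' \<ge> 1" unfolding K'_def using K e by auto
  show "\<exists>K. \<forall>n. norm (z^n) \<le> K * e^n"
  proof (intro exI allI)
    fix n show "norm (z^n) \<le> K' * e^n"
    proof (cases n)
      case 0 thus ?thesis using K'1 by simp
    next
      case (Suc j)
      have "norm (z^n) \<le> C * norm (w^j)" using assms(2) Suc by simp
      also have "\<dots> \<le> \<bar>C\<bar> * (K * e^j)"
      proof -
        have "C * norm (w^j) \<le> \<bar>C\<bar> * norm (w^j)" by (intro mult_right_mono) auto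
        also have "\<dots> \<le> \<bar>C\<bar> * (K * e^j)" using K(2)[of j] by (intro mult_left_mono) auto
        finally show ?thesis .
      qed
      also have "\<dots> = (\<bar>C\<bar> * K / e) * e^n" using Suc e by simp
      also have "\<dots> \<le> K' * e^n" unfolding K'_def using e by (intro mult_right_mono) auto
      finally show ?thesis .
    qed
  qed
qed



lemma arith_helper: "(A::real)^(n+2)*B*(K*r^n)*D = (A^2*B*K*D)*((A*r)^n)"
  by (simp add: power_add power_mult_distrib mult_ac power2_eq_square)

theorem lemma2p3:
  fixes a b :: "'a::complex_banach_algebra_1" and lam :: complex
  assumes "lam \<noteq> 0" and "qnil a" and "gdrazin b"
    and "a * b = scaleC lam (b * a * spec_idem b)"
  shows "gdrazin (a + b)
    \<and> summable (\<lambda>n. gdrazin_inv b ^ (n + 2) * a * (a + b) ^ n)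
    \<and> gdrazin_inv (a + b) = gdrazin_inv b + (\<Sum>n. gdrazin_inv b ^ (n + 2) * a * (a + b) ^ n)"
proof -
  define x where "x = gdrazin_inv b"
  have gx: "is_gdrazin_inv b x"
    using assms(3) gd_inv_eq unfolding gdrazin_def x_def by metis
  have bx: "b*x = x*b" "x = x*b*x" "qnil (b - b^2*x)" using gx unfolding is_gdrazin_inv_def by auto
  define q where "q = b*x"
  define p where "p = 1 - q"
  have sp: "spec_idem b = p" unfolding spec_idem_def p_def q_def x_def ..
  have H: "a * b = scaleC lam (b * a * p)" using assms(4) sp by simp
  have qq: "q*q = q" unfolding q_def by (metis bx(2) mult.assoc)
  have xq: "x*q = x" "q*x = x" unfolding q_def using bx by (metis mult.assoc)+
  have pp: "p*p = p" unfolding p_def using qq by (simp add: algebra_simps)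
  have pq: "p*q = 0" "q*p = 0" unfolding p_def using qq by (simp_all add: algebra_simps)
  have bq: "b*q = q*b" unfolding q_def using bx(1) by (metis mult.assoc)
  have bp: "b*p = p*b" unfolding p_def using bq by (simp add: algebra_simps)
  have px: "p*x = 0" "x*p = 0" using xq pq by (metis mult.assoc mult_zero_left mult_zero_right)+
  have abq: "a*b*q = 0" using H pq by (simp add: mult_scaleC_left mult.assoc)
  have aq: "a*q = 0"
  proof -
    have "a*q = a*(q*q)" using qq by simp
    also have "\<dots> = a*(b*(x*b)*x)" unfolding q_def by (simp add: mult.assoc)
    also have "\<dots> = (a*b*q)*x" unfolding q_def using bx(1) by (simp add: mult.assoc)
    finally show ?thesis using abq by simp
  qed
  have ap: "a*p = a" unfolding p_def using aq by (simp add: algebra_simps)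
  have ax: "a*x = 0" using aq xq by (metis mult.assoc mult_zero_left)
  define s where "s = a + b"
  define c where "c = p*s"
  have psq: "p*s*q = 0" unfolding s_def using aq pq bp
    by (simp add: algebra_simps) (metis mult.assoc mult_zero_right mult_zero_left)
  have cp: "c*p = c"
  proof -
    have "c*p = c - c*q" by (simp add: p_def right_diff_distrib)
    also have "c*q = 0" unfolding c_def using psq .
    finally show ?thesis by simp
  qed
  have pc: "p*c = c" unfolding c_def using pp by (simp add: mult.assoc[symmetric])
  have ps_pow: "p*s^n = c^n*p" for n
  proof (induction n)
    case (Suc n)
    have "p*s^Suc n = (p*s^n)*s" by (simp add: mult.assoc power_commutes)
    also have "\<dots> = c^n*c" using Suc unfolding c_def by (simp add: mult.assoc)
    also have "\<dots> = c^Suc n * p" using cp by (metis mult.assoc power_Suc2)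
    finally show ?case .
  qed simp
  have as_pow: "a*s^n = a*c^n*p" for n
    using ps_pow[of n] ap by (metis mult.assoc)
  have asp: "a*s^n*p = a*s^n" for n
    using as_pow[of n] pp by (metis mult.assoc)
  have c_eq: "c = p*a + b*p" unfolding c_def s_def using bp by (simp add: algebra_simps)
  have comm: "(p*a)*(b*p) = scaleC lam ((b*p)*(p*a))"
  proof -
    have "(p*a)*(b*p) = p*(a*b)*p" by (simp add: mult.assoc)
    also have "\<dots> = scaleC lam (p*b*a*p*p)" using H by (simp add: mult_scaleC_left mult_scaleC_right mult.assoc)
    also have "\<dots> = scaleC lam ((b*p)*(p*a))" using bp pp ap by (metis mult.assoc)
    finally show ?thesis .
  qed
  have pa_pow: "(p*a)^n*p = p*a^n" for n
  proof (induction n)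
    case (Suc n)
    have "(p*a)^Suc n*p = (p*a)^n*p*(a*p)" by (metis power_Suc2 mult.assoc)
    also have "\<dots> = p*a^Suc n" using Suc ap by (metis power_Suc2 mult.assoc)
    finally show ?case .
  qed simp
  have qnil_pa: "qnil (p*a)"
  proof (rule qnil_shift[OF assms(2), where C = "norm p * norm a"])
    fix n
    have "(p*a)^Suc n = (p*a)^n*p*a" by (metis power_Suc2 mult.assoc)
    also have "\<dots> = p*a^n*a" using pa_pow by simp
    finally have "(p*a)^Suc n = p*(a*a^n)" by (simp add: mult.assoc power_commutes)
    hence "norm ((p*a)^Suc n) \<le> norm p * norm (a*a^n)" by (simp add: norm_mult_ineq)
    also have "\<dots> \<le> norm p * (norm a * norm (a^n))" by (intro mult_left_mono norm_mult_ineq) auto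
    finally have "norm ((p*a)^Suc n) \<le> norm p * (norm a * norm (a^n))" .
    thus "norm ((p*a)^Suc n) \<le> norm p * norm a * norm (a^n)" by (simp add: mult.assoc)
  qed
  have qnil_bp: "qnil (b*p)" using bx(3) unfolding p_def q_def by (simp add: algebra_simps power2_eq_square)
  have qnil_c: "qnil c" unfolding c_eq by (rule qnil_lambda_sum[OF comm assms(1) qnil_pa qnil_bp])
  define t where "t n = x^(n+2)*a*s^n" for n
  have t_eq: "t n = gdrazin_inv b ^ (n + 2) * a * (a + b) ^ n" for n
    unfolding t_def x_def s_def ..
  define r where "r = 1/(2*(norm x + 1))"
  have nx: "norm x + 1 > 0" by (simp add: add_nonneg_pos)
  have r: "r > 0" unfolding r_def using nx by simp
  obtain K where K: "K \<ge> 1" "\<And>n. norm (c^n) \<le> K * r^n" using qnil_bound[OF qnil_c r] by auto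
  have t_bound: "norm (t n) \<le> ((norm x + 1)^2 * norm a * K * norm p) * (1/2)^n" for n
  proof -
    have "t n = x^(n+2)*a*c^n*p" unfolding t_def using as_pow by (simp add: mult.assoc)
    hence "norm (t n) \<le> norm (x^(n+2)*a*c^n) * norm p" by (simp add: norm_mult_ineq)
    also have "\<dots> \<le> norm (x^(n+2)*a) * norm (c^n) * norm p"
      by (intro mult_right_mono norm_mult_ineq) auto
    also have "\<dots> \<le> norm (x^(n+2)) * norm a * norm (c^n) * norm p"
      by (intro mult_right_mono norm_mult_ineq) auto
    finally have "norm (t n) \<le> norm (x^(n+2)) * norm a * norm (c^n) * norm p" .
    also have "\<dots> \<le> (norm x + 1)^(n+2) * norm a * (K * r^n) * norm p"
    proof -
      have h1: "norm (x^(n+2)) \<le> (norm x + 1)^(n+2)"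
        by (intro order_trans[OF norm_power_ineq] power_mono) auto
      have h2: "0 \<le> (norm x + 1)^(n+2)" using nx by simp
      have f1: "norm (x^(n+2)) * norm a \<le> (norm x + 1)^(n+2) * norm a"
        using h1 by (intro mult_right_mono) auto
      have f2: "0 \<le> (norm x + 1)^(n+2) * norm a" using h2 by simp
      have "norm (x^(n+2)) * norm a * norm (c^n) \<le> (norm x + 1)^(n+2) * norm a * (K * r^n)"
        by (rule mult_mono[OF f1 K(2)[of n] f2]) simp
      thus ?thesis by (rule mult_right_mono) simp
    qed
    also have "\<dots> = ((norm x + 1)^2 * norm a * K * norm p) * ((norm x + 1) * r)^n"
      by (rule arith_helper)
    also have "(norm x + 1) * r = 1/2" unfolding r_def using nx by simp
    finally show ?thesis .
  qed
  have sum_t: "summable t"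
    by (rule summable_comparison_test[OF _ summable_mult[OF summable_geometric]])
       (use t_bound in auto)
  define Y where "Y = suminf t"
  have qt: "q * t n = t n" for n
  proof -
    have "q * x^(n+2) = x^(n+2)" using xq(2) by (simp add: mult.assoc[symmetric])
    thus ?thesis unfolding t_def by (metis mult.assoc)
  qed
  have tp: "t n * p = t n" for n unfolding t_def using asp by (simp add: mult.assoc)
  have qY: "q*Y = Y" unfolding Y_def
  proof -
    have "q * suminf t = (\<Sum>n. q * t n)" by (rule suminf_mult[OF sum_t, symmetric])
    also have "\<dots> = suminf t" by (simp only: qt)
    finally show "q * suminf t = suminf t" .
  qed
  have Yp: "Y*p = Y" unfolding Y_def
  proof -
    have "suminf t * p = (\<Sum>n. t n * p)" by (rule suminf_mult2[OF sum_t])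
    also have "\<dots> = suminf t" by (simp only: tp)
    finally show "suminf t * p = suminf t" .
  qed
  have pY: "p*Y = 0"
  proof -
    have "p*Y = (p*q)*Y" using qY by (simp add: mult.assoc)
    thus ?thesis using pq by simp
  qed
  have Yq: "Y*q = 0"
  proof -
    have "Y*q = Y*(p*q)" using Yp by (simp add: mult.assoc[symmetric])
    thus ?thesis using pq by simp
  qed
  have Yx: "Y*x = 0"
  proof -
    have "Y*x = Y*(p*x)" using Yp by (simp add: mult.assoc[symmetric])
    thus ?thesis using px by simp
  qed
  have aY: "a*Y = 0"
  proof -
    have "a*Y = (a*q)*Y" using qY by (simp add: mult.assoc)
    thus ?thesis using aq by simp
  qed
  have YY: "Y*Y = 0"
  proof -
    have "Y*Y = Y*(p*Y)" using Yp by (simp add: mult.assoc[symmetric])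
    thus ?thesis using pY by simp
  qed
  have bY: "b*Y = x*a + Y*s"
  proof -
    define u where "u n = x^(n+1)*a*s^n" for n
    have bt: "b * t n = u n" for n
    proof -
      have xx: "x^(n+2) = x * x^(n+1)" by simp
      have "b * x^(n+2) = q * x^(n+1)" unfolding q_def xx by (simp only: mult.assoc)
      also have "\<dots> = x^(n+1)" using xq(2) by (simp add: mult.assoc[symmetric])
      finally have bx2: "b * x^(n+2) = x^(n+1)" .
      have "b * t n = (b * x^(n+2))*a*s^n" unfolding t_def by (simp only: mult.assoc)
      thus ?thesis unfolding bx2 u_def .
    qed
    have us: "u (Suc n) = t n * s" for n
    proof -
      have "u (Suc n) = x^(n+2)*a*(s^n*s)" unfolding u_def by (simp add: power_commutes)
      thus ?thesis unfolding t_def by (simp only: mult.assoc)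
    qed
    have su: "summable u" using summable_mult[OF sum_t, of b] by (simp only: bt)
    have "b*Y = (\<Sum>n. b * t n)" unfolding Y_def by (rule suminf_mult[OF sum_t, symmetric])
    also have "\<dots> = suminf u" by (simp only: bt)
    also have "\<dots> = u 0 + (\<Sum>n. u (Suc n))" using suminf_split_head[OF su] by simp
    also have "(\<Sum>n. u (Suc n)) = (\<Sum>n. t n * s)" by (simp only: us)
    also have "\<dots> = Y * s" unfolding Y_def by (rule suminf_mult2[OF sum_t, symmetric])
    finally show ?thesis unfolding u_def by simp
  qed
  define y where "y = x + Y"
  have sx: "s*x = q"
  proof -
    have "s*x = a*x + b*x" unfolding s_def by (rule distrib_right)
    thus ?thesis using ax unfolding q_def by simp
  qed
  have xs: "x*s = x*a + q"
  proof -
    have "x*s = x*a + x*b" unfolding s_def by (rule distrib_left)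
    thus ?thesis using bx(1) unfolding q_def by simp
  qed
  have sy: "s*y = q + b*Y"
  proof -
    have "s*y = s*x + s*Y" unfolding y_def by (rule distrib_left)
    also have "s*Y = a*Y + b*Y" unfolding s_def by (rule distrib_right)
    finally show ?thesis using sx aY by simp
  qed
  have ys: "y*s = s*y"
  proof -
    have "y*s = x*s + Y*s" unfolding y_def by (rule distrib_right)
    thus ?thesis using xs sy bY by (simp only: add_ac)
  qed
  have ysy: "y*s*y = y"
  proof -
    have "y*s*y = (q + b*Y)*(x + Y)" using ys sy unfolding y_def by simp
    also have "\<dots> = q*x + q*Y + (b*(Y*x) + b*(Y*Y))" by (simp only: distrib_left distrib_right mult.assoc add_ac)
    also have "\<dots> = y" unfolding y_def using xq qY Yx YY by simp
    finally show ?thesis .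
  qed
  define m where "m = s*(p - b*Y)"
  have m_eq: "s - s^2*y = m"
  proof -
    have "s^2*y = s*(q + b*Y)" using sy by (simp add: power2_eq_square mult.assoc)
    hence "s - s^2*y = s*(1 - q - b*Y)" by (simp add: right_diff_distrib distrib_left)
    thus ?thesis unfolding m_def p_def by simp
  qed
  have mp: "m*p = m"
  proof -
    have "m*p = s*(p*p - b*(Y*p))" unfolding m_def by (simp add: left_diff_distrib right_diff_distrib mult.assoc)
    thus ?thesis unfolding m_def using pp Yp by simp
  qed
  have cbY: "c*b*Y = 0"
  proof -
    have "c*b*Y = c*(p*b)*Y" using cp by (simp add: mult.assoc[symmetric])
    also have "\<dots> = c*b*(p*Y)" using bp[symmetric] by (simp add: mult.assoc)
    finally show ?thesis using pY by simp
  qed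
  have pm: "p*m = c"
  proof -
    have "p*m = (p*s)*p - (p*s)*b*Y" unfolding m_def by (simp add: right_diff_distrib mult.assoc)
    thus ?thesis using cp cbY unfolding c_def[symmetric] by simp
  qed
  have mpow: "m^Suc n = m*c^n" for n
  proof (induction n)
    case (Suc n)
    have "m^Suc (Suc n) = m * m^Suc n" by (rule power_Suc)
    also have "\<dots> = m*(m*c^n)" by (simp only: Suc.IH)
    also have "\<dots> = (m*p)*m*c^n" by (simp only: mp mult.assoc)
    also have "\<dots> = m*(p*m)*c^n" by (simp only: mult.assoc)
    also have "\<dots> = m*c^Suc n" using pm by (simp add: mult.assoc)
    finally show ?case .
  qed simp
  have qnil_m: "qnil m"
  proof (rule qnil_shift[OF qnil_c, where C = "norm m"])
    fix n show "norm (m^Suc n) \<le> norm m * norm (c^n)" unfolding mpow by (rule norm_mult_ineq)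
  qed
  have gd: "is_gdrazin_inv s y"
    unfolding is_gdrazin_inv_def
  proof (intro conjI)
    show "s*y = y*s" by (rule ys[symmetric])
    show "y = y*s*y" by (rule ysy[symmetric])
    show "qnil (s - s^2*y)" unfolding m_eq by (rule qnil_m)
  qed
  have inv: "gdrazin_inv s = y" by (rule gd_inv_eq[OF gd])
  have teq: "t = (\<lambda>n. gdrazin_inv b ^ (n + 2) * a * (a + b) ^ n)" using t_eq by (intro ext) simp
  show ?thesis
  proof (intro conjI)
    show "gdrazin (a + b)" unfolding gdrazin_def s_def[symmetric] using gd by blast
    show "summable (\<lambda>n. gdrazin_inv b ^ (n + 2) * a * (a + b) ^ n)" using sum_t unfolding teq .
    show "gdrazin_inv (a + b) = gdrazin_inv b + (\<Sum>n. gdrazin_inv b ^ (n + 2) * a * (a + b) ^ n)"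
      using inv unfolding teq[symmetric] y_def Y_def x_def s_def .
  qed
qed


end
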